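(* If distribution $\mathcal D$ stochastically dominates distribution $\mathcal D'$ (both with finite support), then ${\sf MBRev}(\mathcal D)\ge{\sf MBRev}(\mathcal D')$.
   Context: $\mathcal D$ stochastically dominates $\mathcal D'$ if $\Pr_{u\sim\mathcal D}[u\ge t]\ge\Pr_{u\sim\mathcal D'}[u\ge t]$ for all $t$. For a finitely supported distribution with support $v_1<\dots<v_m$ and $\Pr[v_i]=q_i>0$, ${\sf MBRev}$ is the optimal value of the LP: maximize $\sum_i q_i(v_ix_i-u_i)$ subject to $u_i\ge(v_i-v_j)x_j$ for all $i>j$, $u_i\ge0$, $0\le x_i\le1$. Equivalently ${\sf MBRev}=\max_{x}\mathbb E_{v_i}[v_ix_i-\max_{j<i}(v_i-v_j)x_j]$ (max over $j<i$ of an empty set taken as $0$, and terms negative replaced by $0$ through $u_i\ge0$). *)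

theory Defs
  imports "HOL-Probability.Probability"
begin

definition stoch_dom :: "real pmf \<Rightarrow> real pmf \<Rightarrow> bool" where
  "stoch_dom D D' \<longleftrightarrow>
     (\<forall>t::real. measure_pmf.prob D {u. u \<ge> t} \<ge> measure_pmf.prob D' {u. u \<ge> t})"

definition mb_feasible :: "real pmf \<Rightarrow> (real \<Rightarrow> real) \<Rightarrow> (real \<Rightarrow> real) \<Rightarrow> bool" where
  "mb_feasible D x u \<longleftrightarrow>
     (\<forall>v\<in>set_pmf D. 0 \<le> x v \<and> x v \<le> 1 \<and> 0 \<le> u v \<and>
        (\<forall>w\<in>set_pmf D. w < v \<longrightarrow> u v \<ge> (v - w) * x w))"

definition mb_objective :: "real pmf \<Rightarrow> (real \<Rightarrow> real) \<Rightarrow> (real \<Rightarrow> real) \<Rightarrow> real" where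
  "mb_objective D x u = (\<Sum>v\<in>set_pmf D. pmf D v * (v * x v - u v))"

text \<open>MBRev: the optimal value of the LP (the LP is feasible, e.g. x = u = 0, and its
  value is bounded, so the supremum is the maximum).\<close>
definition MBRev :: "real pmf \<Rightarrow> real" where
  "MBRev D = Sup {mb_objective D x u | x u. mb_feasible D x u}"

end

theory Submission
  imports Defs
begin

lemma prob_as_sum:
  fixes D :: "real pmf"
  assumes "finite T" "set_pmf D \<subseteq> T"
  shows "measure_pmf.prob D B = (\<Sum>v\<in>{v\<in>T. v \<in> B}. pmf D v)"
proof -
  have "measure_pmf.prob D B = measure_pmf.prob D (B \<inter> set_pmf D)"
    by (simp add: measure_Int_set_pmf)
  also have "\<dots> = sum (pmf D) (B \<inter> set_pmf D)"
    using assms by (intro measure_measure_pmf_finite) (auto intro: finite_subset)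
  also have "\<dots> = (\<Sum>v\<in>{v\<in>T. v \<in> B}. pmf D v)"
    using assms by (intro sum.mono_neutral_left) (auto simp: set_pmf_eq)
  finally show ?thesis .
qed

lemma abel:
  fixes h g :: "real \<Rightarrow> real"
  assumes "finite T" "\<And>a. 0 \<le> (\<Sum>v\<in>{v\<in>T. a \<le> v}. h v)" "mono g"
  shows "\<And>m. (\<forall>v\<in>T. m \<le> g v) \<Longrightarrow> m * sum h T \<le> (\<Sum>v\<in>T. h v * g v)"
  using assms(1,2)
proof (induction T rule: finite_linorder_min_induct)
  case empty
  then show ?case by simp
next
  case (insert b A)
  have tA: "0 \<le> (\<Sum>v\<in>{v\<in>A. a \<le> v}. h v)" for a
  proof (cases "b < a")
    case True
    then have "{v\<in>insert b A. a \<le> v} = {v\<in>A. a \<le> v}" by auto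
    then show ?thesis using insert.prems(2)[of a] by simp
  next
    case False
    show ?thesis
    proof (cases "A = {}")
      case True then show ?thesis by simp
    next
      case ne: False
      have "{v\<in>A. a \<le> v} = A" using False insert.hyps(2) by force
      moreover have "{v\<in>insert b A. Min A \<le> v} = A"
        using insert.hyps(1,2) ne by (auto, meson Min_in insert.hyps(1) less_le_not_le ne)
      ultimately show ?thesis using insert.prems(2)[of "Min A"] by simp
    qed
  qed
  have bnot: "b \<notin> A" using insert.hyps(2) by auto
  have gb: "\<forall>v\<in>A. g b \<le> g v" using insert.hyps(2) assms(3) by (auto simp: mono_def less_imp_le)
  have IH: "g b * sum h A \<le> (\<Sum>v\<in>A. h v * g v)"
    using insert.IH[OF gb] tA by blast
  have tot: "0 \<le> sum h (insert b A)"
  proof -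
    have "{v\<in>insert b A. b \<le> v} = insert b A" using insert.hyps(2) by force
    then show ?thesis using insert.prems(2)[of b] by simp
  qed
  have mb: "m \<le> g b" using insert.prems(1) by simp
  have "m * sum h (insert b A) \<le> g b * sum h (insert b A)"
    using mb tot by (simp add: mult_right_mono)
  also have "\<dots> = g b * h b + g b * sum h A"
    using insert.hyps(1) bnot by (simp add: distrib_left)
  also have "\<dots> \<le> h b * g b + (\<Sum>v\<in>A. h v * g v)" using IH by simp
  also have "\<dots> = (\<Sum>v\<in>insert b A. h v * g v)"
    using insert.hyps(1) bnot by simp
  finally show ?case .
qed


definition yfun :: "real set \<Rightarrow> (real \<Rightarrow> real) \<Rightarrow> real \<Rightarrow> real" where
  "yfun S x w = Max (insert 0 (x ` {z\<in>S. 0 < z \<and> z \<le> w}))"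

definition Ufun :: "real set \<Rightarrow> (real \<Rightarrow> real) \<Rightarrow> real \<Rightarrow> real" where
  "Ufun S y v = Max (insert 0 ((\<lambda>z. (v - z) * y z) ` {z\<in>S. z < v}))"

lemma yfun_ge0: "finite S \<Longrightarrow> 0 \<le> yfun S x w"
  unfolding yfun_def by (simp)

lemma yfun_le1: "finite S \<Longrightarrow> \<forall>z\<in>S. x z \<le> 1 \<Longrightarrow> yfun S x w \<le> 1"
  unfolding yfun_def by (auto)

lemma yfun_mono: "finite S \<Longrightarrow> w1 \<le> w2 \<Longrightarrow> yfun S x w1 \<le> yfun S x w2"
  unfolding yfun_def by (rule Max_mono) auto

lemma yfun_nonpos: "finite S \<Longrightarrow> w \<le> 0 \<Longrightarrow> yfun S x w = 0"
proof -
  assume "w \<le> 0"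
  then have e: "{z\<in>S. 0 < z \<and> z \<le> w} = {}" by auto
  show ?thesis unfolding yfun_def e by simp
qed

lemma yfun_ge: "finite S \<Longrightarrow> z \<in> S \<Longrightarrow> 0 < z \<Longrightarrow> z \<le> w \<Longrightarrow> x z \<le> yfun S x w"
  unfolding yfun_def by (rule Max_ge) auto

lemma yfun_cases: "finite S \<Longrightarrow> yfun S x w = 0 \<or> (\<exists>z\<in>S. 0 < z \<and> z \<le> w \<and> yfun S x w = x z)"
proof -
  assume f: "finite S"
  have "yfun S x w \<in> insert 0 (x ` {z\<in>S. 0 < z \<and> z \<le> w})"
    unfolding yfun_def using f by (intro Max_in) auto
  then show ?thesis by auto
qed

lemma Ufun_ge0: "finite S \<Longrightarrow> 0 \<le> Ufun S y v"
  unfolding Ufun_def by simp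

lemma Ufun_ge: "finite S \<Longrightarrow> z \<in> S \<Longrightarrow> z < v \<Longrightarrow> (v - z) * y z \<le> Ufun S y v"
  unfolding Ufun_def by (rule Max_ge) auto

lemma Ufun_le: "finite S \<Longrightarrow> 0 \<le> c \<Longrightarrow> (\<And>z. z \<in> S \<Longrightarrow> z < v \<Longrightarrow> (v - z) * y z \<le> c) \<Longrightarrow> Ufun S y v \<le> c"
  unfolding Ufun_def by (auto)

theorem lemmaC4:
  fixes D D' :: "real pmf"
  assumes "finite (set_pmf D)" and "finite (set_pmf D')"
    and "stoch_dom D D'"
  shows "MBRev D \<ge> MBRev D'"
proof -
  define S where "S = set_pmf D"
  define S' where "S' = set_pmf D'"
  have fS: "finite S" and fS': "finite S'" using assms(1,2) S_def S'_def by auto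
  define A where "A = {mb_objective D x u | x u. mb_feasible D x u}"
  define A' where "A' = {mb_objective D' x u | x u. mb_feasible D' x u}"
  have bdd: "bdd_above A"
  proof (rule bdd_aboveI)
    fix a assume "a \<in> A"
    then obtain x u where feas: "mb_feasible D x u" and a: "a = mb_objective D x u"
      unfolding A_def by auto
    have "a = (\<Sum>v\<in>S. pmf D v * (v * x v - u v))" using a S_def mb_objective_def by simp
    also have "\<dots> \<le> (\<Sum>v\<in>S. pmf D v * \<bar>v\<bar>)"
    proof (rule sum_mono)
      fix v assume vS: "v \<in> S"
      then have "0 \<le> x v" "x v \<le> 1" "0 \<le> u v" using feas S_def mb_feasible_def by auto
      then have "v * x v - u v \<le> \<bar>v\<bar>"
      proof -
        have "v * x v \<le> \<bar>v\<bar> * x v" using \<open>0 \<le> x v\<close> by (intro mult_right_mono) auto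
        also have "\<dots> \<le> \<bar>v\<bar>" using \<open>x v \<le> 1\<close> by (intro mult_left_le) auto
        finally show ?thesis using \<open>0 \<le> u v\<close> by simp
      qed
      then show "pmf D v * (v * x v - u v) \<le> pmf D v * \<bar>v\<bar>"
        by (simp add: mult_left_mono pmf_nonneg)
    qed
    finally show "a \<le> (\<Sum>v\<in>S. pmf D v * \<bar>v\<bar>)" .
  qed
  have ne: "A' \<noteq> {}"
  proof -
    have "mb_feasible D' (\<lambda>_. 0) (\<lambda>_. 0)" unfolding mb_feasible_def by simp
    then show ?thesis unfolding A'_def by blast
  qed
  have key: "a \<le> Sup A" if "a \<in> A'" for a
  proof -
    obtain x' u' where feas: "mb_feasible D' x' u'" and a: "a = mb_objective D' x' u'"
      using \<open>a \<in> A'\<close> unfolding A'_def by auto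
    have x0: "\<And>w. w \<in> S' \<Longrightarrow> 0 \<le> x' w" and x1: "\<And>w. w \<in> S' \<Longrightarrow> x' w \<le> 1"
      and u0: "\<And>w. w \<in> S' \<Longrightarrow> 0 \<le> u' w"
      and uic: "\<And>v w. v \<in> S' \<Longrightarrow> w \<in> S' \<Longrightarrow> w < v \<Longrightarrow> (v - w) * x' w \<le> u' v"
      using feas unfolding mb_feasible_def S'_def by auto
    define y where "y = yfun S' x'"
    define U' where "U' = Ufun S' y"
    define US where "US = Ufun S y"
    define g where "g = (\<lambda>v. v * y v - U' v)"
    have y0: "0 \<le> y w" for w unfolding y_def using yfun_ge0[OF fS'] .
    have y1: "y w \<le> 1" for w unfolding y_def using yfun_le1[OF fS'] x1 by blast
    have ymono: "y w1 \<le> y w2" if "w1 \<le> w2" for w1 w2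
      unfolding y_def using yfun_mono[OF fS' that] .
    have ynp: "y w = 0" if "w \<le> 0" for w unfolding y_def using yfun_nonpos[OF fS' that] .
    have yge: "x' z \<le> y w" if "z \<in> S'" "0 < z" "z \<le> w" for z w
      unfolding y_def using yfun_ge[OF fS' that] .
    have ycases: "y w = 0 \<or> (\<exists>z\<in>S'. 0 < z \<and> z \<le> w \<and> y w = x' z)" for w
      unfolding y_def using yfun_cases[OF fS'] .
    have clA: "w * x' w - u' w \<le> g w" if wS: "w \<in> S'" for w
    proof -
      have "U' w \<le> u' w"
        unfolding U'_def
      proof (rule Ufun_le[OF fS' u0[OF wS]])
        fix z assume zS: "z \<in> S'" and zw: "z < w"
        from ycases[of z] show "(w - z) * y z \<le> u' w"
        proof
          assume "y z = 0" then show ?thesis using u0[OF wS] by simp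
        next
          assume "\<exists>z''\<in>S'. 0 < z'' \<and> z'' \<le> z \<and> y z = x' z''"
          then obtain z'' where z'': "z'' \<in> S'" "0 < z''" "z'' \<le> z" "y z = x' z''" by blast
          have "(w - z) * x' z'' \<le> (w - z'') * x' z''"
            using z'' x0[OF z''(1)] by (intro mult_right_mono) auto
          also have "\<dots> \<le> u' w" using uic[OF wS z''(1)] z'' zw by simp
          finally show ?thesis using z'' by simp
        qed
      qed
      moreover have "w * x' w \<le> w * y w"
      proof (cases "0 < w")
        case True then show ?thesis using yge[OF wS True] by (simp add: mult_left_mono)
      next
        case False then show ?thesis using ynp[of w] x0[OF wS]
          by (simp add: mult_nonpos_nonneg)
      qed
      ultimately show ?thesis unfolding g_def by simp
    qed
    have feasD: "mb_feasible D y US"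
      unfolding mb_feasible_def US_def S_def[symmetric]
      using y0 y1 Ufun_ge0[OF fS] Ufun_ge[OF fS] by auto
    have clC: "US v \<le> U' v" for v
      unfolding US_def
    proof (rule Ufun_le[OF fS])
      show "0 \<le> U' v" unfolding U'_def using Ufun_ge0[OF fS'] .
      fix w assume wS: "w \<in> S" and wv: "w < v"
      from ycases[of w] show "(v - w) * y w \<le> U' v"
      proof
        assume "y w = 0" then show ?thesis using Ufun_ge0[OF fS'] U'_def by simp
      next
        assume "\<exists>z''\<in>S'. 0 < z'' \<and> z'' \<le> w \<and> y w = x' z''"
        then obtain z'' where z'': "z'' \<in> S'" "0 < z''" "z'' \<le> w" "y w = x' z''" by blast
        have "(v - w) * x' z'' \<le> (v - z'') * x' z''"
          using z'' x0[OF z''(1)] by (intro mult_right_mono) auto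
        also have "\<dots> \<le> (v - z'') * y z''"
          using z'' wv yge[OF z''(1) z''(2)] by (intro mult_left_mono) auto
        also have "\<dots> \<le> U' v" unfolding U'_def using Ufun_ge[OF fS' z''(1)] z'' wv by simp
        finally show ?thesis using z'' by simp
      qed
    qed
    have U'np: "U' v = 0" if "v \<le> 0" for v
    proof -
      have "U' v \<le> 0" unfolding U'_def
        by (rule Ufun_le[OF fS']) (use that ynp in auto)
      then show ?thesis using Ufun_ge0[OF fS'] U'_def by (simp add: antisym)
    qed
    have gnn: "0 \<le> g v" for v
    proof (cases "0 < v")
      case False then show ?thesis using ynp U'np g_def by simp
    next
      case True
      have "U' v \<le> v * y v" unfolding U'_def
      proof (rule Ufun_le[OF fS'])
        show "0 \<le> v * y v" using True y0 by simp
        fix z assume "z \<in> S'" "z < v"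
        show "(v - z) * y z \<le> v * y v"
        proof (cases "0 < z")
          case False then show ?thesis using ynp[of z] True y0 by simp
        next
          case zp: True
          have "(v - z) * y z \<le> v * y z" using zp y0[of z] by (simp add: algebra_simps)
          also have "\<dots> \<le> v * y v" using True ymono[of z v] \<open>z < v\<close> by (simp add: mult_left_mono)
          finally show ?thesis .
        qed
      qed
      then show ?thesis unfolding g_def by simp
    qed
    have gmono: "mono g"
    proof (rule monoI)
      fix v1 v2 :: real assume le: "v1 \<le> v2"
      show "g v1 \<le> g v2"
      proof (cases "0 < v1")
        case False then show ?thesis using ynp U'np g_def gnn[of v2] by simp
      next
        case pos: True
        have "U' v2 \<le> U' v1 + (v2 - v1) * y v2" unfolding U'_def
        proof (rule Ufun_le[OF fS'])
          show "0 \<le> Ufun S' y v1 + (v2 - v1) * y v2"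
            using Ufun_ge0[OF fS', of y v1] le y0[of v2] by simp
          fix z assume zS: "z \<in> S'" and zv: "z < v2"
          show "(v2 - z) * y z \<le> Ufun S' y v1 + (v2 - v1) * y v2"
          proof (cases "z < v1")
            case True
            have "(v2 - z) * y z = (v1 - z) * y z + (v2 - v1) * y z" by (simp add: algebra_simps)
            also have "\<dots> \<le> Ufun S' y v1 + (v2 - v1) * y v2"
              using Ufun_ge[OF fS' zS True, of y] ymono[of z v2] zv le
              by (intro add_mono) (auto intro: mult_left_mono)
            finally show ?thesis .
          next
            case False
            have "(v2 - z) * y z \<le> (v2 - v1) * y v2"
              using False zv ymono[of z v2] y0[of z] by (intro mult_mono) auto
            then show ?thesis using Ufun_ge0[OF fS', of y v1] by simp
          qed
        qed
        moreover have "v1 * y v1 \<le> v1 * y v2" using pos ymono[OF le] by (simp add: mult_left_mono)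
        ultimately show ?thesis unfolding g_def by (simp add: algebra_simps)
      qed
    qed
    define T where "T = S \<union> S'"
    have fT: "finite T" using fS fS' T_def by simp
    define h where "h = (\<lambda>v. pmf D v - pmf D' v)"
    have tails: "0 \<le> (\<Sum>v\<in>{v\<in>T. a \<le> v}. h v)" for a
    proof -
      have "measure_pmf.prob D {u. a \<le> u} = (\<Sum>v\<in>{v\<in>T. v \<in> {u. a \<le> u}}. pmf D v)"
        by (rule prob_as_sum[OF fT]) (auto simp: T_def S_def)
      moreover have "measure_pmf.prob D' {u. a \<le> u} = (\<Sum>v\<in>{v\<in>T. v \<in> {u. a \<le> u}}. pmf D' v)"
        by (rule prob_as_sum[OF fT]) (auto simp: T_def S'_def)
      moreover have "measure_pmf.prob D' {u. a \<le> u} \<le> measure_pmf.prob D {u. a \<le> u}"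
        using assms(3) unfolding stoch_dom_def by blast
      ultimately show ?thesis unfolding h_def by (simp add: sum_subtractf)
    qed
    have "0 * sum h T \<le> (\<Sum>v\<in>T. h v * g v)"
      using abel[OF fT tails gmono] gnn by blast
    then have "(\<Sum>v\<in>T. pmf D' v * g v) \<le> (\<Sum>v\<in>T. pmf D v * g v)"
      unfolding h_def by (simp add: left_diff_distrib sum_subtractf)
    moreover have "(\<Sum>v\<in>T. pmf D v * g v) = (\<Sum>v\<in>S. pmf D v * g v)"
      using fT by (intro sum.mono_neutral_right) (auto simp: T_def S_def set_pmf_eq)
    moreover have "(\<Sum>v\<in>T. pmf D' v * g v) = (\<Sum>v\<in>S'. pmf D' v * g v)"
      using fT by (intro sum.mono_neutral_right) (auto simp: T_def S'_def set_pmf_eq)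
    ultimately have E: "(\<Sum>v\<in>S'. pmf D' v * g v) \<le> (\<Sum>v\<in>S. pmf D v * g v)" by simp
    have "a = (\<Sum>v\<in>S'. pmf D' v * (v * x' v - u' v))"
      using a S'_def mb_objective_def by simp
    also have "\<dots> \<le> (\<Sum>v\<in>S'. pmf D' v * g v)"
      using clA by (intro sum_mono mult_left_mono) (auto simp: pmf_nonneg)
    also have "\<dots> \<le> (\<Sum>v\<in>S. pmf D v * g v)" by (rule E)
    also have "\<dots> \<le> (\<Sum>v\<in>S. pmf D v * (v * y v - US v))"
      using clC unfolding g_def by (intro sum_mono mult_left_mono) (auto simp: pmf_nonneg)
    also have "\<dots> = mb_objective D y US" using S_def mb_objective_def by simp
    also have "\<dots> \<le> Sup A"
      using feasD bdd unfolding A_def by (intro cSup_upper) auto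
    finally show ?thesis .
  qed
  have "Sup A' \<le> Sup A" using ne key by (intro cSup_least) auto
  then show ?thesis unfolding MBRev_def A_def A'_def by simp
qed

end
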